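(* Let $\mathbf{u}=(u_1,u_2)$ be a pair of real binary forms of degree $d$, and let $g,h,u_1',u_2'$ be real binary forms with $(u_1,u_2)=(u_1'gh,u_2'gh)$, $\gcd(u_1,u_2)=gh$, $\gcd(u_1',u_2')=1$, $\gcd(u_1'^2+u_2'^2,g)=1$, and such that every (possibly complex) root of $h$ is a root of $u_1'^2+u_2'^2$. Then both $u_1'^2+u_2'^2$ and $h$ have no real roots, and $\deg(h)$ is even.
   Context: A real binary form is a homogeneous polynomial in two variables $x_1,x_2$ with real coefficients. A root of a binary form $q$ is a nonzero point $(a,b)\in\mathbb{C}^2$ (up to scaling) with $q(a,b)=0$; a real root is one with $(a,b)\in\mathbb{R}^2\setminus\{0\}$. $\gcd$ of binary forms is the common divisor of highest degree (unique up to scalar); $\gcd=1$ means coprime. *)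

theory Defs
  imports "HOL-Computational_Algebra.Computational_Algebra"
begin

text \<open>A real binary form in x1, x2 is represented as a bivariate polynomial of type
  real poly poly: the outer variable is x2, the coefficients are polynomials in x1.
  The monomial x1^j x2^i has coefficient coeff (coeff q i) j.\<close>

definition is_bform :: "real poly poly \<Rightarrow> nat \<Rightarrow> bool" where
  "is_bform q d \<longleftrightarrow> (\<forall>i j. coeff (coeff q i) j \<noteq> 0 \<longrightarrow> i + j = d)"

definition is_binary_form :: "real poly poly \<Rightarrow> bool" where
  "is_binary_form q \<longleftrightarrow> (\<exists>d. is_bform q d)"

definition bf_degree :: "real poly poly \<Rightarrow> nat" where
  "bf_degree q = Max ({i + j | i j. coeff (coeff q i) j \<noteq> 0} \<union> {0})"

definition bf_eval :: "real poly poly \<Rightarrow> complex \<Rightarrow> complex \<Rightarrow> complex" where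
  "bf_eval q a b = poly (map_poly (\<lambda>c. poly (map_poly of_real c) a) q) b"

definition bf_root :: "real poly poly \<Rightarrow> complex \<Rightarrow> complex \<Rightarrow> bool" where
  "bf_root q a b \<longleftrightarrow> (a, b) \<noteq> (0, 0) \<and> bf_eval q a b = 0"

definition bf_has_real_root :: "real poly poly \<Rightarrow> bool" where
  "bf_has_real_root q \<longleftrightarrow> (\<exists>a b :: real. bf_root q (of_real a) (of_real b))"

definition is_gcd_of :: "real poly poly \<Rightarrow> real poly poly \<Rightarrow> real poly poly \<Rightarrow> bool" where
  "is_gcd_of f a b \<longleftrightarrow> f dvd a \<and> f dvd b \<and> (\<forall>c. c dvd a \<longrightarrow> c dvd b \<longrightarrow> c dvd f)"

end

theory Submission
  imports Defs
begin

definition evr :: "real poly poly \<Rightarrow> real \<Rightarrow> real \<Rightarrow> real" where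
  "evr q x y = poly (poly q [:y:]) x"

lemma evr_mult[simp]: "evr (p * q) x y = evr p x y * evr q x y"
  by (simp add: evr_def)
lemma evr_add[simp]: "evr (p + q) x y = evr p x y + evr q x y"
  by (simp add: evr_def)
lemma evr_power[simp]: "evr (p ^ n) x y = evr p x y ^ n"
  by (simp add: evr_def poly_power)
lemma evr_smult[simp]: "evr (smult c q) x y = poly c x * evr q x y"
  by (simp add: evr_def)

lemma evr_alt: "evr q x y = poly (map_poly (\<lambda>c. poly c x) q) y"
  unfolding evr_def by (induct q) (auto simp: map_poly_pCons algebra_simps)

lemma poly_of_real_aux: "poly (map_poly of_real p) (of_real x) = (of_real (poly p x) :: complex)"
  by (induction p) (auto simp: map_poly_pCons)

lemma bf_eval_real: "bf_eval q (of_real x) (of_real y) = of_real (evr q x y)"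
  unfolding evr_def bf_eval_def
  by (induct q) (auto simp: map_poly_pCons algebra_simps poly_of_real_aux)

lemma poly_sum_upto: "degree (p::real poly) \<le> N \<Longrightarrow> poly p x = (\<Sum>i\<le>N. coeff p i * x ^ i)"
proof -
  assume N: "degree p \<le> N"
  have "poly p x = (\<Sum>i\<le>degree p. coeff p i * x ^ i)" by (rule poly_altdef)
  also have "\<dots> = (\<Sum>i\<le>N. coeff p i * x ^ i)"
    by (rule sum.mono_neutral_left) (use N in \<open>auto simp: coeff_eq_0\<close>)
  finally show ?thesis .
qed

lemma evr_sum: "evr q x y = (\<Sum>i\<le>degree q. \<Sum>j\<le>degree (coeff q i). coeff (coeff q i) j * x ^ j * y ^ i)"
proof -
  have "evr q x y = (\<Sum>i\<le>degree q. coeff (map_poly (\<lambda>c. poly c x) q) i * y ^ i)"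
    unfolding evr_alt by (rule poly_sum_upto) (rule degree_le, auto simp: coeff_map_poly coeff_eq_0)
  also have "\<dots> = (\<Sum>i\<le>degree q. poly (coeff q i) x * y ^ i)"
    by (simp add: coeff_map_poly)
  also have "\<dots> = (\<Sum>i\<le>degree q. \<Sum>j\<le>degree (coeff q i). coeff (coeff q i) j * x ^ j * y ^ i)"
    by (simp add: poly_altdef sum_distrib_right)
  finally show ?thesis .
qed

lemma evr_scale:
  assumes "is_bform q k"
  shows "evr q (t*x) (t*y) = t^k * evr q x y"
proof -
  have "coeff (coeff q i) j * (t*x) ^ j * (t*y) ^ i = t^k * (coeff (coeff q i) j * x ^ j * y ^ i)" for i j
  proof (cases "coeff (coeff q i) j = 0")
    case False
    then have "i + j = k" using assms unfolding is_bform_def by auto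
    then show ?thesis by (auto simp: power_mult_distrib power_add algebra_simps)
  qed simp
  then show ?thesis unfolding evr_sum sum_distrib_left by (intro sum.cong refl) (simp add: mult.assoc)
qed

definition linf :: "real \<Rightarrow> real \<Rightarrow> real poly poly" where
  "linf a b = (if a = 0 then [:[:0,1:]:] else [: [:0,-b:], [:a:] :])"

lemma linf_not_unit: "\<not> is_unit (linf a b)"
proof
  assume "is_unit (linf a b)"
  then obtain c where c: "linf a b = [:c:]" "is_unit c" unfolding is_unit_poly_iff by auto
  show False
  proof (cases "a = 0")
    case True
    then have "c = [:0,1:]" using c(1) by (simp add: linf_def)
    then show False using c(2) unfolding is_unit_poly_iff by auto
  next
    case False
    then have "coeff (linf a b) 1 = [:a:]" by (simp add: linf_def)
    then show False using c(1) False by simp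
  qed
qed

lemma linf_dvd:
  assumes q: "is_bform q k" and ab: "(a,b) \<noteq> (0,0)" and z: "evr q a b = 0"
  shows "linf a b dvd q"
proof (cases "a = 0")
  case True
  then have b: "b \<noteq> 0" using ab by auto
  have "evr q 0 y = 0" for y
    using evr_scale[OF q, of "y/b" 0 b] z True b by simp
  then have "\<forall>y. poly (map_poly (\<lambda>c. poly c 0) q) y = 0" by (simp add: evr_alt)
  then have "map_poly (\<lambda>c. poly c 0) q = 0" using poly_all_0_iff_0 by blast
  then have "poly (coeff q i) 0 = 0" for i
    by (metis coeff_0 coeff_map_poly poly_0)
  then have "[:0,1:] dvd coeff q i" for i
    using dvd_iff_poly_eq_0[of 0 "coeff q i"] by simp
  then have "[:[:0,1:]:] dvd q" using const_poly_dvd_iff by blast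
  then show ?thesis using True by (simp add: linf_def)
next
  case False
  define L where "L = [: [:0,-b:], [:a:] :]"
  have L: "L \<noteq> 0" "degree L = 1" "coeff L (degree L) = [:a:]" using False by (auto simp: L_def)
  obtain s r where pd: "pseudo_divmod q L = (s, r)" by (metis surj_pair)
  define n where "n = Suc (degree q) - degree L"
  have eq: "smult ([:a:] ^ n) q = L * s + r" using pseudo_divmod(1)[OF L(1) pd] L n_def by simp
  have "r = 0 \<or> degree r < degree L" using pseudo_divmod(2)[OF L(1) pd] .
  then have rdeg: "degree r = 0" using L by auto
  define r0 where "r0 = coeff r 0"
  have rr: "r = [:r0:]" unfolding r0_def using rdeg
    by (metis degree_0_id)
  have evL: "evr L x y = a * y - b * x" for x y by (simp add: L_def evr_def algebra_simps)
  have "poly r0 (t * a) = 0" for t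
  proof -
    have "evr (smult ([:a:] ^ n) q) (t*a) (t*b) = evr (L * s + r) (t*a) (t*b)" using eq by simp
    moreover have "evr q (t*a) (t*b) = 0" using evr_scale[OF q, of t a b] z by simp
    ultimately show ?thesis using evL[of "t*a" "t*b"] rr by (simp add: evr_def)
  qed
  then have "poly r0 x = 0" for x using \<open>poly r0 ((x/a) * a) = 0\<close> False by simp
  then have "r0 = 0" using poly_all_0_iff_0 by blast
  then have eq2: "smult ([:a ^ n:]) q = L * s" using eq rr by (simp add: poly_const_pow)
  have "q = smult [:inverse (a ^ n):] (smult ([:a ^ n:]) q)" using False by (simp add: one_pCons[symmetric])
  also have "\<dots> = L * smult [:inverse (a ^ n):] s" using eq2 by simp
  finally have "L dvd q" by (metis dvdI)
  then show ?thesis using False by (simp add: linf_def L_def)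
qed

lemma no_real_root_sos:
  assumes "is_binary_form u" "is_binary_form v" "coprime u v"
  shows "\<not> bf_has_real_root (u^2 + v^2)"
proof
  assume "bf_has_real_root (u^2 + v^2)"
  then obtain a b :: real where r: "bf_root (u^2+v^2) (of_real a) (of_real b)"
    unfolding bf_has_real_root_def by auto
  then have ab: "(a,b) \<noteq> (0,0)" unfolding bf_root_def by auto
  from r have "complex_of_real (evr (u^2+v^2) a b) = 0" unfolding bf_root_def bf_eval_real by blast
  then have "evr (u^2+v^2) a b = 0" by (simp only: of_real_eq_0_iff)
  then have "evr u a b ^2 + evr v a b ^2 = 0" by simp
  then have zu: "evr u a b = 0" and zv: "evr v a b = 0" by (simp_all add: sum_power2_eq_zero_iff)
  obtain ku kv where "is_bform u ku" "is_bform v kv" using assms unfolding is_binary_form_def by auto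
  then have "linf a b dvd u" "linf a b dvd v" using linf_dvd ab zu zv by blast+
  then have "is_unit (linf a b)" using assms(3) coprime_common_divisor by blast
  then show False using linf_not_unit by blast
qed

lemma ivt01:
  fixes F :: "real \<Rightarrow> real"
  assumes "\<And>x. isCont F x" "F 0 * F 1 \<le> 0"
  shows "\<exists>t. 0 \<le> t \<and> t \<le> 1 \<and> F t = 0"
proof (cases "F 0 \<le> 0")
  case True
  then have "F 1 \<ge> 0 \<or> F 0 = 0" using assms(2) by (auto simp: mult_le_0_iff)
  then show ?thesis
  proof
    assume "F 1 \<ge> 0"
    then show ?thesis using IVT[of F 0 0 1] True assms(1) by auto
  qed auto
next
  case False
  then have "F 1 \<le> 0" using assms(2) by (auto simp: mult_le_0_iff)
  then show ?thesis using IVT2[of F 1 0 0] False assms(1) by auto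
qed

lemma odd_root:
  assumes h: "is_bform h k" and k: "odd k"
  shows "\<exists>a b. (a,b) \<noteq> (0::real,0::real) \<and> evr h a b = 0"
proof -
  define c1 where "c1 = evr h 1 0"
  define c2 where "c2 = evr h 0 1"
  have c3: "evr h (-1) 0 = - c1" using evr_scale[OF h, of "-1" 1 0] k by (simp add: c1_def)
  have cf: "isCont (\<lambda>t. evr h (1-t) t) x" for x unfolding evr_sum by (intro continuous_intros)
  have cg: "isCont (\<lambda>t. evr h (-t) (1-t)) x" for x unfolding evr_sum by (intro continuous_intros)
  show ?thesis
  proof (cases "c1 * c2 \<le> 0")
    case True
    then obtain t where "evr h (1-t) t = 0" using ivt01[OF cf] by (auto simp: c1_def c2_def)
    moreover have "(1-t, t) \<noteq> (0,0)" by auto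
    ultimately show ?thesis by blast
  next
    case False
    then have "c2 * (-c1) \<le> 0" by (simp add: mult_le_0_iff not_le) (smt (verit) mult_le_0_iff)
    then obtain t where "evr h (-t) (1-t) = 0" using ivt01[OF cg] c3 by (auto simp: c1_def c2_def)
    moreover have "(-t, 1-t) \<noteq> (0,0)" by auto
    ultimately show ?thesis by blast
  qed
qed

lemma bf_degree_0: "bf_degree 0 = 0"
  by (simp add: bf_degree_def)

lemma bf_degree_eq:
  assumes "is_bform h k" "h \<noteq> 0"
  shows "bf_degree h = k"
proof -
  obtain i where i: "coeff h i \<noteq> 0" using assms(2) by (metis leading_coeff_0_iff)
  then obtain j where j: "coeff (coeff h i) j \<noteq> 0" by (metis leading_coeff_0_iff)
  have "{i + j | i j. coeff (coeff h i) j \<noteq> 0} = {k}"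
    using assms(1) i j unfolding is_bform_def by auto
  then show ?thesis by (simp add: bf_degree_def)
qed


theorem proposition3p6:
  fixes u1 u2 g h u1' u2' :: "real poly poly" and d :: nat
  assumes "is_bform u1 d" and "is_bform u2 d"
    and "is_binary_form g" and "is_binary_form h"
    and "is_binary_form u1'" and "is_binary_form u2'"
    and "u1 = u1' * g * h" and "u2 = u2' * g * h"
    and "is_gcd_of (g * h) u1 u2"
    and "coprime u1' u2'"
    and "coprime (u1'^2 + u2'^2) g"
    and "\<forall>a b. bf_root h a b \<longrightarrow> bf_root (u1'^2 + u2'^2) a b"
  shows "\<not> bf_has_real_root (u1'^2 + u2'^2) \<and> \<not> bf_has_real_root h \<and> even (bf_degree h)"
proof -
  have n1: "\<not> bf_has_real_root (u1'^2 + u2'^2)"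
    using no_real_root_sos assms(5,6,10) by blast
  have n2: "\<not> bf_has_real_root h"
    using n1 assms(12) unfolding bf_has_real_root_def by blast
  obtain k where hk: "is_bform h k" using assms(4) unfolding is_binary_form_def by auto
  have "even k"
  proof (rule ccontr)
    assume "odd k"
    then obtain a b where "(a,b) \<noteq> (0::real,0::real)" "evr h a b = 0" using odd_root hk by blast
    then have "bf_root h (of_real a) (of_real b)" unfolding bf_root_def bf_eval_real by auto
    then show False using n2 unfolding bf_has_real_root_def by blast
  qed
  then have "even (bf_degree h)"
    by (cases "h = 0") (simp_all add: bf_degree_0 bf_degree_eq[OF hk])
  then show ?thesis using n1 n2 by blast
qed

end
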